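(* Let $M$ and $M'$ be two stable matchings in an instance $I$ of SPA-S. If some student $s_i$ is assigned in $M$ and in $M'$ to different projects that are offered by the same lecturer $l_k$, and $s_i$ prefers $M$ to $M'$, then there exists a student $s_r\in M'(l_k)\setminus M(l_k)$ such that $l_k$ prefers $s_r$ to $s_i$. In particular $M(l_k)\neq M'(l_k)$.
   Context: An instance $I$ of SPA-S consists of a finite set $\mathcal{S}$ of students, a finite set $\mathcal{P}$ of projects and a finite set $\mathcal{L}$ of lecturers. Each student $s_i$ ranks a subset $A_i\subseteq\mathcal{P}$ (its acceptable projects) in strict order. Each project is offered by exactly one lecturer; lecturer $l_k$ offers a nonempty set $P_k\subseteq\mathcal{P}$, the $P_k$ partitioning $\mathcal{P}$. Each lecturer $l_k$ ranks in strict order the students who find at least one project of $P_k$ acceptable. Projects have capacities $c_j\in\mathbb{Z}^+$, lecturers have capacities $d_k\in\mathbb{Z}^+$ with $\max\{c_j:p_j\in P_k\}\le d_k\le\sum\{c_j:p_j\in P_k\}$. A pair $(s_i,p_j)$, $p_j$ offered by $l_k$, is acceptable if $p_j\in A_i$ and $s_i$ is on $l_k$'s list. A matching $M$ is a set of acceptable pairs with each student in at most one pair, $|M(p_j)|\le c_j$, $|M(l_k)|\le d_k$, where $M(s_i)$, $M(p_j)$, $M(l_k)$ denote the project of $s_i$, the students assigned to $p_j$, and the students assigned to projects of $l_k$. Undersubscribed/full means fewer than/exactly capacity many assigned students. An acceptable pair $(s_i,p_j)\notin M$ ($p_j$ offered by $l_k$) blocks $M$ if ($s_i$ is unassigned or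 prefers $p_j$ to $M(s_i)$) and one of: (P1) $p_j$ and $l_k$ undersubscribed; (P2) $p_j$ undersubscribed, $l_k$ full, $s_i\in M(l_k)$; (P3) $p_j$ undersubscribed, $l_k$ full, $l_k$ prefers $s_i$ to the worst student of $M(l_k)$; (P4) $p_j$ full and $l_k$ prefers $s_i$ to the worst student of $M(p_j)$. $M$ is stable if it has no blocking pair. A student $s$ prefers $M$ to $M'$ if $s$ is assigned in both and prefers $M(s)$ to $M'(s)$. *)

theory Defs
  imports Main
begin

text \<open>An SPA-S instance. Strict preference lists are encoded by rank functions
  (smaller rank = more preferred) that are injective on the list.\<close>

record ('s,'p,'l) spa =
  studs :: "'s set"
  projs :: "'p set"
  lects :: "'l set"
  acc   :: "'s \<Rightarrow> 'p set"
  rankS :: "'s \<Rightarrow> 'p \<Rightarrow> nat"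
  offer :: "'p \<Rightarrow> 'l"
  rankL :: "'l \<Rightarrow> 's \<Rightarrow> nat"
  pcap  :: "'p \<Rightarrow> nat"
  lcap  :: "'l \<Rightarrow> nat"

definition offered :: "('s,'p,'l) spa \<Rightarrow> 'l \<Rightarrow> 'p set" where
  "offered I l = {p \<in> projs I. offer I p = l}"

definition llist :: "('s,'p,'l) spa \<Rightarrow> 'l \<Rightarrow> 's set" where
  "llist I l = {s \<in> studs I. \<exists>p \<in> acc I s. offer I p = l}"

definition valid_spa :: "('s,'p,'l) spa \<Rightarrow> bool" where
  "valid_spa I \<longleftrightarrow>
     finite (studs I) \<and> finite (projs I) \<and> finite (lects I) \<and>
     (\<forall>s \<in> studs I. acc I s \<subseteq> projs I \<and> inj_on (rankS I s) (acc I s)) \<and>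
     (\<forall>p \<in> projs I. offer I p \<in> lects I \<and> pcap I p \<ge> 1) \<and>
     (\<forall>l \<in> lects I. offered I l \<noteq> {} \<and> inj_on (rankL I l) (llist I l) \<and>
        Max (pcap I ` offered I l) \<le> lcap I l \<and>
        lcap I l \<le> (\<Sum>p \<in> offered I l. pcap I p))"

definition prefS :: "('s,'p,'l) spa \<Rightarrow> 's \<Rightarrow> 'p \<Rightarrow> 'p \<Rightarrow> bool" where
  "prefS I s p q \<longleftrightarrow> rankS I s p < rankS I s q"

definition prefL :: "('s,'p,'l) spa \<Rightarrow> 'l \<Rightarrow> 's \<Rightarrow> 's \<Rightarrow> bool" where
  "prefL I l s t \<longleftrightarrow> rankL I l s < rankL I l t"

definition acceptable :: "('s,'p,'l) spa \<Rightarrow> 's \<Rightarrow> 'p \<Rightarrow> bool" where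
  "acceptable I s p \<longleftrightarrow> s \<in> studs I \<and> p \<in> acc I s \<and> s \<in> llist I (offer I p)"

definition Mp :: "('s \<times> 'p) set \<Rightarrow> 'p \<Rightarrow> 's set" where
  "Mp M p = {s. (s, p) \<in> M}"

definition Ml :: "('s,'p,'l) spa \<Rightarrow> ('s \<times> 'p) set \<Rightarrow> 'l \<Rightarrow> 's set" where
  "Ml I M l = {s. \<exists>p. (s, p) \<in> M \<and> offer I p = l}"

definition matching :: "('s,'p,'l) spa \<Rightarrow> ('s \<times> 'p) set \<Rightarrow> bool" where
  "matching I M \<longleftrightarrow>
     (\<forall>(s,p) \<in> M. acceptable I s p) \<and>
     (\<forall>s p q. (s,p) \<in> M \<longrightarrow> (s,q) \<in> M \<longrightarrow> p = q) \<and>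
     (\<forall>p \<in> projs I. card (Mp M p) \<le> pcap I p) \<and>
     (\<forall>l \<in> lects I. card (Ml I M l) \<le> lcap I l)"

definition assigned :: "('s \<times> 'p) set \<Rightarrow> 's \<Rightarrow> bool" where
  "assigned M s \<longleftrightarrow> (\<exists>p. (s,p) \<in> M)"

definition worst :: "('s,'p,'l) spa \<Rightarrow> 'l \<Rightarrow> 's set \<Rightarrow> 's" where
  "worst I l X = (ARG_MAX (rankL I l) t. t \<in> X)"

definition blocking :: "('s,'p,'l) spa \<Rightarrow> ('s \<times> 'p) set \<Rightarrow> 's \<Rightarrow> 'p \<Rightarrow> bool" where
  "blocking I M s p \<longleftrightarrow>
     (let l = offer I p in
      acceptable I s p \<and> (s,p) \<notin> M \<and>
      (\<not> assigned M s \<or> (\<exists>q. (s,q) \<in> M \<and> prefS I s p q)) \<and>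
      ( (card (Mp M p) < pcap I p \<and> card (Ml I M l) < lcap I l)
      \<or> (card (Mp M p) < pcap I p \<and> card (Ml I M l) = lcap I l \<and> s \<in> Ml I M l)
      \<or> (card (Mp M p) < pcap I p \<and> card (Ml I M l) = lcap I l \<and>
           prefL I l s (worst I l (Ml I M l)))
      \<or> (card (Mp M p) = pcap I p \<and> prefL I l s (worst I l (Mp M p)))))"

definition stable :: "('s,'p,'l) spa \<Rightarrow> ('s \<times> 'p) set \<Rightarrow> bool" where
  "stable I M \<longleftrightarrow> matching I M \<and> (\<forall>s p. \<not> blocking I M s p)"

end

theory Submission
  imports Defs
begin

lemma worst_prop:
  assumes "finite X" "x \<in> X"
  shows "worst I l X \<in> X \<and> rankL I l x \<le> rankL I l (worst I l X)"
proof -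
  have "\<forall>y. y \<in> X \<longrightarrow> rankL I l y < Suc (Max (rankL I l ` X))"
    using assms by (simp add: le_imp_less_Suc)
  from arg_max_nat_lemma[of "\<lambda>t. t\<in>X" x "rankL I l", OF assms(2) this] assms
  show ?thesis unfolding worst_def by auto
qed

lemma Mp_sub: "matching I M \<Longrightarrow> Mp M p \<subseteq> studs I"
  unfolding matching_def Mp_def acceptable_def by auto

lemma Ml_sub: "matching I M \<Longrightarrow> Ml I M l \<subseteq> studs I"
  unfolding matching_def Ml_def acceptable_def by auto

lemma step:
  fixes I :: "('s,'p,'l) spa" and M M' :: "('s \<times> 'p) set"
  assumes V: "valid_spa I"
    and S: "stable I M" and S': "stable I M'"
    and sp: "(s, p) \<in> M" and sp': "(s, p') \<in> M'" and pp: "p \<noteq> p'"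
    and op: "offer I p = l" and op': "offer I p' = l"
    and pr: "prefS I s p p'"
  shows "\<exists>r. (r,p) \<in> M' \<and> prefL I l r s \<and>
           (r \<notin> Ml I M l \<or> (\<exists>q. (r,q) \<in> M \<and> offer I q = l \<and> q \<noteq> p \<and> prefS I r q p))"
proof -
  have m: "matching I M" and m': "matching I M'" using S S' unfolding stable_def by auto
  have accsp: "acceptable I s p" using m sp unfolding matching_def by auto
  have accsp': "acceptable I s p'" using m' sp' unfolding matching_def by auto
  have pP: "p \<in> projs I" using accsp V unfolding acceptable_def valid_spa_def by auto
  have lL: "l \<in> lects I" using pP V op unfolding valid_spa_def by auto
  have pc1: "pcap I p \<ge> 1" using pP V unfolding valid_spa_def by auto
  have injL: "inj_on (rankL I l) (llist I l)" using lL V unfolding valid_spa_def by auto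
  have sll: "s \<in> llist I l" using accsp op unfolding acceptable_def by auto
  have fS: "finite (studs I)" using V unfolding valid_spa_def by auto
  have finMp: "finite (Mp M q)" "finite (Mp M' q)" for q
    using Mp_sub[OF m, of q] Mp_sub[OF m', of q] fS by (auto intro: finite_subset)
  have finMl: "finite (Ml I M l)" "finite (Ml I M' l)"
    using Ml_sub[OF m, of l] Ml_sub[OF m', of l] fS by (auto intro: finite_subset)
  have uniq': "\<And>q. (s,q) \<in> M' \<Longrightarrow> q = p'" using m' sp' unfolding matching_def by blast
  have spM': "(s,p) \<notin> M'" using uniq' pp by blast
  have sMl': "s \<in> Ml I M' l" using sp' op' unfolding Ml_def by auto
  have cpM': "card (Mp M' p) \<le> pcap I p" using m' pP unfolding matching_def by auto
  have clM': "card (Ml I M' l) \<le> lcap I l" using m' lL unfolding matching_def by auto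
  have nb: "\<not> blocking I M' s p" using S' unfolding stable_def by auto
  have full': "card (Mp M' p) = pcap I p"
  proof (rule ccontr)
    assume "card (Mp M' p) \<noteq> pcap I p"
    hence "card (Mp M' p) < pcap I p" using cpM' by auto
    hence "blocking I M' s p" using clM' accsp spM' sp' pr sMl' op
      unfolding blocking_def Let_def by (cases "card (Ml I M' l) < lcap I l") auto
    thus False using nb by auto
  qed
  have nw: "\<not> prefL I l s (worst I l (Mp M' p))"
  proof
    assume "prefL I l s (worst I l (Mp M' p))"
    hence "blocking I M' s p" using full' accsp spM' sp' pr op
      unfolding blocking_def Let_def by auto
    thus False using nb by auto
  qed
  have better: "prefL I l r s" if r: "r \<in> Mp M' p" for r
  proof -
    have w: "rankL I l r \<le> rankL I l (worst I l (Mp M' p))"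
      using worst_prop[where I=I and l=l, OF finMp(2) r] by auto
    have rs: "r \<noteq> s" using r spM' unfolding Mp_def by auto
    have "acceptable I r p" using r m' unfolding Mp_def matching_def by auto
    hence rll: "r \<in> llist I l" using op unfolding acceptable_def by auto
    have "rankL I l r \<noteq> rankL I l s" using injL rll sll rs by (meson inj_on_def)
    thus ?thesis using w nw unfolding prefL_def by auto
  qed
  have cpM: "card (Mp M p) \<le> pcap I p" using m pP unfolding matching_def by auto
  have "\<not> Mp M' p \<subseteq> Mp M p"
  proof
    assume sub: "Mp M' p \<subseteq> Mp M p"
    have "s \<in> Mp M p" "s \<notin> Mp M' p" using sp spM' unfolding Mp_def by auto
    hence "Mp M' p \<subseteq> Mp M p - {s}" using sub by auto
    hence "card (Mp M' p) \<le> card (Mp M p - {s})" using finMp(1) by (intro card_mono) auto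
    also have "\<dots> < card (Mp M p)" using \<open>s \<in> Mp M p\<close> finMp(1)[of p] by (intro card_Diff1_less)
    finally show False using cpM full' by auto
  qed
  then obtain r where rM': "r \<in> Mp M' p" and rM: "r \<notin> Mp M p" by auto
  have rp': "(r,p) \<in> M'" and rpM: "(r,p) \<notin> M" using rM' rM unfolding Mp_def by auto
  have rbs: "prefL I l r s" using better rM' by auto
  have accrp: "acceptable I r p" using rp' m' unfolding matching_def by auto
  have nbr: "\<not> blocking I M r p" using S unfolding stable_def by auto
  have sMp: "s \<in> Mp M p" and sMl: "s \<in> Ml I M l" using sp op unfolding Mp_def Ml_def by auto
  have cond: "\<not> assigned M r \<or> (\<exists>q. (r,q) \<in> M \<and> prefS I r p q) \<Longrightarrow> False"
  proof -
    assume a: "\<not> assigned M r \<or> (\<exists>q. (r,q) \<in> M \<and> prefS I r p q)"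
    have ws: "rankL I l s \<le> rankL I l (worst I l (Mp M p))"
      using worst_prop[where I=I and l=l, OF finMp(1) sMp] by auto
    have wl: "rankL I l s \<le> rankL I l (worst I l (Ml I M l))"
      using worst_prop[where I=I and l=l, OF finMl(1) sMl] by auto
    have clM: "card (Ml I M l) \<le> lcap I l" using m lL unfolding matching_def by auto
    have "blocking I M r p"
    proof (cases "card (Mp M p) < pcap I p")
      case True
      then show ?thesis using a accrp rpM clM wl rbs op
        unfolding blocking_def Let_def prefL_def
        by (cases "card (Ml I M l) < lcap I l") auto
    next
      case False
      then show ?thesis using a accrp rpM cpM ws rbs op
        unfolding blocking_def Let_def prefL_def by auto
    qed
    thus False using nbr by auto
  qed
  show ?thesis
  proof (cases "r \<in> Ml I M l")
    case False
    thus ?thesis using rp' rbs by auto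
  next
    case True
    then obtain q where rq: "(r,q) \<in> M" and oq: "offer I q = l" unfolding Ml_def by auto
    have qp: "q \<noteq> p" using rq rpM by auto
    have "\<not> prefS I r p q" using cond rq unfolding assigned_def by auto
    moreover have accrq: "acceptable I r q" using rq m unfolding matching_def by auto
    moreover have "inj_on (rankS I r) (acc I r)" using accrq V unfolding acceptable_def valid_spa_def by auto
    ultimately have "prefS I r q p" using accrp qp unfolding prefS_def acceptable_def
      by (metis inj_on_def linorder_neqE_nat)
    thus ?thesis using rp' rbs rq oq qp by blast
  qed
qed

lemma main:
  fixes I :: "('s,'p,'l) spa" and M M' :: "('s \<times> 'p) set"
  assumes V: "valid_spa I" and S: "stable I M" and S': "stable I M'"
  shows "(s, p) \<in> M \<Longrightarrow> (s, p') \<in> M' \<Longrightarrow> p \<noteq> p' \<Longrightarrow> offer I p = l \<Longrightarrow> offer I p' = l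
    \<Longrightarrow> prefS I s p p' \<Longrightarrow> \<exists>r \<in> Ml I M' l - Ml I M l. prefL I l r s"
proof (induction "rankL I l s" arbitrary: s p p' rule: less_induct)
  case less
  from step[OF V S S' less.prems] obtain r where
    r: "(r,p) \<in> M'" "prefL I l r s"
      "r \<notin> Ml I M l \<or> (\<exists>q. (r,q) \<in> M \<and> offer I q = l \<and> q \<noteq> p \<and> prefS I r q p)"
    by blast
  show ?case
  proof (cases "r \<in> Ml I M l")
    case False
    moreover have "r \<in> Ml I M' l" using r(1) less.prems unfolding Ml_def by auto
    ultimately show ?thesis using r(2) by auto
  next
    case True
    then obtain q where q: "(r,q) \<in> M" "offer I q = l" "q \<noteq> p" "prefS I r q p" using r(3) by auto
    have "rankL I l r < rankL I l s" using r(2) unfolding prefL_def .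
    from less.hyps[OF this q(1) r(1) q(3) q(2) less.prems(4) q(4)]
    obtain r' where "r' \<in> Ml I M' l - Ml I M l" "prefL I l r' r" by auto
    thus ?thesis using r(2) unfolding prefL_def by (meson order.strict_trans)
  qed
qed

theorem lemma1:
  fixes I :: "('s,'p,'l) spa" and M M' :: "('s \<times> 'p) set"
  assumes "valid_spa I"
    and "stable I M" and "stable I M'"
    and "(s, p) \<in> M" and "(s, p') \<in> M'" and "p \<noteq> p'"
    and "offer I p = l" and "offer I p' = l"
    and "prefS I s p p'"
  shows "(\<exists>r \<in> Ml I M' l - Ml I M l. prefL I l r s) \<and> Ml I M l \<noteq> Ml I M' l"
proof -
  from main[OF assms] show ?thesis by auto
qed

end
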